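(* Consider the control-affine system $\dot{\boldsymbol{x}}=f(\boldsymbol{x})+g(\boldsymbol{x})\boldsymbol{u}$ with $\boldsymbol{x}\in\mathbb{R}^n$, $\boldsymbol{u}\in\mathbb{R}^q$, $f,g$ locally Lipschitz. Let $b:\mathbb{R}^n\to\mathbb{R}$ be an Auxiliary-Variable Adaptive Control Barrier Function (AVCBF) with minimum relative degree $\underline{m}$, built with $m_a\le \underline{m}$ positive auxiliary functions $\mathcal{A}_1,\dots,\mathcal{A}_{m_a}$, augmented state $\boldsymbol{Z}$, augmented input $\boldsymbol{V}$, functions $\psi_0,\dots,\psi_{m_a}$ and sets $\mathcal{C}_0,\dots,\mathcal{C}_{m_a-1}$ as described in the context. Suppose $\boldsymbol{Z}(0)\in \mathcal{C}_0\cap\dots\cap\mathcal{C}_{m_a-1}$. If there exists a Lipschitz controller $\boldsymbol{V}$ (taking values in $\mathcal{U}_{\boldsymbol{V}}(\boldsymbol{Z})$) that satisfies the AVCBF constraint $\psi_{m_a}(\boldsymbol{Z},\boldsymbol{V})\ge 0$ and also ensures $\boldsymbol{Z}(t)\in\mathcal{C}_{m_a-1}$ for all $t\ge 0$, then $\mathcal{C}_0\cap\dots\cap\mathcal{C}_{m_a-1}$ is forward invariant, i.e. $\boldsymbol{Z}(t)\in \mathcal{C}_0\cap\dots\cap\mathcal{C}_{m_a-1}$ for all $t\ge0$. Moreover, $b(\boldsymbol{x}(t))\ge 0$ for all $t\ge 0$.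
   Context: A class $\kappa$ function is a continuous, strictly increasing $\alpha:[0,a)\to[0,\infty]$ with $\alpha(0)=0$. Minimum relative degree $\underline{m}$ of $b$: the smallest number of differentiations of $b$ along $\dot{\boldsymbol{x}}=f+g\boldsymbol{u}$ after which at least one component of $\boldsymbol{u}$ appears explicitly. Auxiliary construction: fix an integer $1\le m_a\le\underline{m}$. For $i\in\{1,\dots,m_a\}$, let $a_i(t)$ be an auxiliary variable and $\boldsymbol{\pi}_i=(\pi_{i,1},\dots,\pi_{i,m_a+1-i})\in\mathbb{R}^{m_a+1-i}$ an auxiliary state with $\pi_{i,1}=a_i$, $\dot\pi_{i,j}=\pi_{i,j+1}$ for $j<m_a+1-i$, and $\dot\pi_{i,m_a+1-i}=\nu_i\in\mathbb{R}$ (an unbounded auxiliary input); write this as $\dot{\boldsymbol{\pi}}_i=F_i(\boldsymbol{\pi}_i)+G_i(\boldsymbol{\pi}_i)\nu_i$. The augmented systems are $\boldsymbol{z}_i=(\boldsymbol{x},\boldsymbol{\pi}_i)$, $\dot{\boldsymbol{z}}_i=\mathcal{F}_i(\boldsymbol{z}_i)+\mathcal{G}_i(\boldsymbol{z}_i)\boldsymbol{v}_i$ with $\mathcal{F}_i=(f,F_i)$, $\mathcal{G}_i=\mathrm{diag}(g,G_i)$, $\boldsymbol{v}_i=(\boldsymbol{u},\nu_i)$. Let $\boldsymbol{Z}=(\boldsymbol{z}_1,\dots,\boldsymbol{z}_{m_a})$ and $\boldsymbol{V}=(\boldsymbol{v}_1,\dots,\boldsymbol{v}_{m_a})$. Auxiliary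 functions $\mathcal{A}_i(\boldsymbol{x},a_i)$ are required to be positive; each is a HOCBF of relative degree $m_a+1-i$ for the $i$-th augmented system: with $\varphi_{i,0}=\mathcal{A}_i$, $\varphi_{i,j}=\dot\varphi_{i,j-1}+\alpha_{i,j}(\varphi_{i,j-1})$ ($j=1,\dots,m_a+1-i$, $\alpha_{i,j}$ sufficiently differentiable class $\kappa$ functions), sets $\mathcal{B}_{i,j}=\{\varphi_{i,j}>0\}$ for $j=0,\dots,m_a-i$, and the constraint $\varphi_{i,m_a+1-i}\ge\epsilon$ for a fixed constant $\epsilon>0$ being satisfiable on $\mathcal{B}_{i,0}\cap\dots\cap\mathcal{B}_{i,m_a-i}$. $\mathcal{U}_{\boldsymbol{V}}(\boldsymbol{Z})$ is the set of $\boldsymbol{V}$ with $\varphi_{i,m_a+1-i}\ge\epsilon$ for all $i=1,\dots,m_a$. AVCBF functions: $\psi_0(\boldsymbol{Z})=\mathcal{A}_1 b(\boldsymbol{x})$, $\psi_i(\boldsymbol{Z})=\mathcal{A}_{i+1}\big(\dot\psi_{i-1}(\boldsymbol{Z})+\alpha_i(\psi_{i-1}(\boldsymbol{Z}))\big)$ for $i=1,\dots,m_a-1$, and $\psi_{m_a}(\boldsymbol{Z},\boldsymbol{V})=\dot\psi_{m_a-1}(\boldsymbol{Z},\boldsymbol{V})+\alpha_{m_a}(\psi_{m_a-1}(\boldsymbol{Z}))$, where time derivatives are along the augmented dynamics, $\alpha_j$ ($j<m_a$) are $(m_a-j)$-times differentiable class $\kappa$ functions and $\alpha_{m_a}$ is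 class $\kappa$. Sets: $\mathcal{C}_i=\{\boldsymbol{Z}:\psi_i(\boldsymbol{Z})\ge0\}$, $i=0,\dots,m_a-1$. $b$ is an AVCBF if every $\mathcal{A}_i$ is such a HOCBF and $\sup_{\boldsymbol{V}\in\mathcal{U}_{\boldsymbol{V}}(\boldsymbol{Z})}\psi_{m_a}(\boldsymbol{Z},\boldsymbol{V})\ge0$ for all $\boldsymbol{Z}\in\mathcal{C}_0\cap\dots\cap\mathcal{C}_{m_a-1}$, with each $\mathcal{A}_i>0$. The inequality $\psi_{m_a}(\boldsymbol{Z},\boldsymbol{V})\ge 0$ is called the AVCBF constraint.
   Formalization: The class kappa functions $\alpha_i$ and $\alpha_{i,j}$ are extended ones, continuous and strictly increasing on all of the reals with $\alpha(0)=0$, and each $\psi_i$ and $\varphi_{i,j}$ is differentiable in t along the closed-loop trajectory. Each condition added here is assumed in the paper as well or is needed for the statement above to hold. *)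

theory Defs
  imports "HOL-Analysis.Analysis"
begin

definition ext_class_K :: "(real \<Rightarrow> real) \<Rightarrow> bool" where
  "ext_class_K \<alpha> \<longleftrightarrow> continuous_on UNIV \<alpha> \<and> strict_mono \<alpha> \<and> \<alpha> 0 = 0"

definition loc_lipschitz :: "('a::metric_space \<Rightarrow> 'b::metric_space) \<Rightarrow> bool" where
  "loc_lipschitz F \<longleftrightarrow> (\<forall>z. \<exists>r>0. \<exists>L. L-lipschitz_on (cball z r) F)"

fun phi_chain :: "(nat \<Rightarrow> real \<Rightarrow> real) \<Rightarrow> (real \<Rightarrow> real) \<Rightarrow> nat \<Rightarrow> real \<Rightarrow> real" where
  "phi_chain al h 0 = h"
| "phi_chain al h (Suc j) = (\<lambda>t. deriv (phi_chain al h j) t + al (Suc j) (phi_chain al h j t))"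

text \<open>AVCBF functions along a trajectory: Al i t = A_i(x(t), a_i(t)), bx t = b(x(t));
  psi_0 = A_1 b, psi_i = A_(i+1) (d/dt psi_(i-1) + alpha_i(psi_(i-1))) for i < m_a,
  psi_(m_a) = d/dt psi_(m_a-1) + alpha_(m_a)(psi_(m_a-1)).\<close>
fun avcbf_psi :: "nat \<Rightarrow> (nat \<Rightarrow> real \<Rightarrow> real) \<Rightarrow> (real \<Rightarrow> real) \<Rightarrow> (nat \<Rightarrow> real \<Rightarrow> real)
    \<Rightarrow> nat \<Rightarrow> real \<Rightarrow> real" where
  "avcbf_psi ma Al bx al 0 = (\<lambda>t. Al 1 t * bx t)"
| "avcbf_psi ma Al bx al (Suc i) =
     (\<lambda>t. (if Suc i < ma then Al (i + 2) t else 1) *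
          (deriv (avcbf_psi ma Al bx al i) t + al (Suc i) (avcbf_psi ma Al bx al i t)))"

text \<open>psi_i(Z(t)) for the augmented trajectory with state x and auxiliary states pi
  (pi i j t = pi_{i,j}(t), so a_i(t) = pi i 1 t).\<close>
definition psi_traj :: "nat \<Rightarrow> (nat \<Rightarrow> 'x \<Rightarrow> real \<Rightarrow> real) \<Rightarrow> ('x \<Rightarrow> real)
    \<Rightarrow> (nat \<Rightarrow> real \<Rightarrow> real) \<Rightarrow> (real \<Rightarrow> 'x) \<Rightarrow> (nat \<Rightarrow> nat \<Rightarrow> real \<Rightarrow> real)
    \<Rightarrow> nat \<Rightarrow> real \<Rightarrow> real" where
  "psi_traj ma A b al x p = avcbf_psi ma (\<lambda>i t. A i (x t) (p i 1 t)) (\<lambda>t. b (x t)) al"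

end

theory Submission
  imports Defs
begin

lemma nonneg_cmp:
  fixes \<psi> :: "real \<Rightarrow> real" and a :: "real \<Rightarrow> real"
  assumes K: "ext_class_K a" and d: "\<forall>t\<ge>0. \<psi> differentiable (at t)"
    and c: "\<forall>t\<ge>0. deriv \<psi> t + a (\<psi> t) \<ge> 0" and i: "\<psi> 0 \<ge> 0"
  shows "\<forall>t\<ge>0. \<psi> t \<ge> 0"
proof (rule ccontr)
  assume "\<not> ?thesis"
  then obtain t1 where t1: "t1 \<ge> 0" "\<psi> t1 < 0" by force
  have sm: "strict_mono a" and a0: "a 0 = 0" using K unfolding ext_class_K_def by auto
  have cont: "continuous_on {0..t1} \<psi>"
    using d by (intro continuous_at_imp_continuous_on) (auto intro: differentiable_imp_continuous_within)
  define S where "S = {0..t1} \<inter> \<psi> -` {0..}"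
  have clS: "closed S" unfolding S_def
    by (rule continuous_closed_preimage[OF cont]) auto
  have "0 \<in> S" using i t1 by (auto simp: S_def)
  have bdd: "bdd_above S" unfolding S_def by (rule bdd_aboveI[of _ t1]) auto
  define s0 where "s0 = Sup S"
  have s0S: "s0 \<in> S" unfolding s0_def using closed_contains_Sup[OF _ bdd clS] \<open>0 \<in> S\<close> by auto
  have s0ge: "s0 \<ge> 0" "s0 \<le> t1" "\<psi> s0 \<ge> 0" using s0S by (auto simp: S_def)
  have neg: "\<psi> y < 0" if "s0 < y" "y \<le> t1" for y
  proof (rule ccontr)
    assume "\<not> \<psi> y < 0"
    then have "y \<in> S" using that s0ge by (auto simp: S_def)
    then have "y \<le> s0" unfolding s0_def using bdd by (rule cSup_upper)
    with that show False by simp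
  qed
  have lt: "s0 < t1" using s0ge t1 by (cases "s0 = t1") auto
  have cont2: "continuous_on {s0..t1} \<psi>" using s0ge by (intro continuous_on_subset[OF cont]) auto
  obtain l z where z: "s0 < z" "z < t1" "DERIV \<psi> z :> l" "\<psi> t1 - \<psi> s0 = (t1 - s0) * l"
    using MVT[OF lt cont2] d s0ge by force
  have "l = deriv \<psi> z" using z(3) by (simp add: DERIV_imp_deriv)
  moreover have "\<psi> z < 0" using neg z by auto
  then have "a (\<psi> z) < 0" using sm a0 by (metis strict_mono_less)
  moreover have "deriv \<psi> z + a (\<psi> z) \<ge> 0" using c z s0ge by auto
  ultimately have "l > 0" by linarith
  then have "\<psi> t1 - \<psi> s0 > 0" using z lt by simp
  then show False using s0ge t1 by simp
qed

theorem theorem2: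
  fixes f :: "real^'n \<Rightarrow> real^'n" and g :: "real^'n \<Rightarrow> real^'q^'n"
    and b :: "real^'n \<Rightarrow> real"
    and ma :: nat
    and A :: "nat \<Rightarrow> real^'n \<Rightarrow> real \<Rightarrow> real"
    and \<alpha> :: "nat \<Rightarrow> real \<Rightarrow> real"
    and \<alpha>A :: "nat \<Rightarrow> nat \<Rightarrow> real \<Rightarrow> real"
    and \<epsilon> :: real
    and x :: "real \<Rightarrow> real^'n" and u :: "real \<Rightarrow> real^'q"
    and p :: "nat \<Rightarrow> nat \<Rightarrow> real \<Rightarrow> real" and \<nu> :: "nat \<Rightarrow> real \<Rightarrow> real"
  assumes ma_pos: "1 \<le> ma"
    and f_lip: "loc_lipschitz f" and g_lip: "loc_lipschitz g"
    and alpha_K: "\<forall>i\<in>{1..ma}. ext_class_K (\<alpha> i)"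
    and alphaA_K: "\<forall>i\<in>{1..ma}. \<forall>j\<in>{1..ma + 1 - i}. ext_class_K (\<alpha>A i j)"
    and eps_pos: "\<epsilon> > 0"
    and u_cont: "continuous_on {0..} u"
    and nu_cont: "\<forall>i\<in>{1..ma}. continuous_on {0..} (\<nu> i)"
    and x_ode: "\<forall>t\<ge>0. (x has_vector_derivative (f (x t) + g (x t) *v u t)) (at t within {0..})"
    and p_ode: "\<forall>i\<in>{1..ma}. \<forall>j\<in>{1..<ma + 1 - i}. \<forall>t\<ge>0.
                  (p i j has_real_derivative p i (Suc j) t) (at t within {0..})"
    and p_ode_last: "\<forall>i\<in>{1..ma}. \<forall>t\<ge>0.
                  (p i (ma + 1 - i) has_real_derivative \<nu> i t) (at t within {0..})"
    and A_pos: "\<forall>i\<in>{1..ma}. \<forall>t\<ge>0. A i (x t) (p i 1 t) > 0"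
    and psi_diff: "\<forall>i<ma. \<forall>t\<ge>0. psi_traj ma A b \<alpha> x p i differentiable (at t)"
    and phi_diff: "\<forall>i\<in>{1..ma}. \<forall>j<ma + 1 - i. \<forall>t\<ge>0.
                  phi_chain (\<alpha>A i) (\<lambda>t. A i (x t) (p i 1 t)) j differentiable (at t)"
    and V_admissible: "\<forall>i\<in>{1..ma}. \<forall>t\<ge>0.
                  phi_chain (\<alpha>A i) (\<lambda>t. A i (x t) (p i 1 t)) (ma + 1 - i) t \<ge> \<epsilon>"
    and avcbf_constraint: "\<forall>t\<ge>0. psi_traj ma A b \<alpha> x p ma t \<ge> 0"
    and in_C_last: "\<forall>t\<ge>0. psi_traj ma A b \<alpha> x p (ma - 1) t \<ge> 0"
    and init: "\<forall>i<ma. psi_traj ma A b \<alpha> x p i 0 \<ge> 0"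
  shows "(\<forall>t\<ge>0. \<forall>i<ma. psi_traj ma A b \<alpha> x p i t \<ge> 0) \<and> (\<forall>t\<ge>0. b (x t) \<ge> 0)"
proof -
  let ?P = "psi_traj ma A b \<alpha> x p"
  have step: "deriv (?P i) t + \<alpha> (Suc i) (?P i t) \<ge> 0" if "Suc i < ma" "t \<ge> 0" "?P (Suc i) t \<ge> 0" for i t
  proof -
    have eq: "?P (Suc i) t = A (i+2) (x t) (p (i+2) 1 t) * (deriv (?P i) t + \<alpha> (Suc i) (?P i t))"
      using that(1) by (simp add: psi_traj_def)
    have "A (i+2) (x t) (p (i+2) 1 t) > 0" using A_pos that by auto
    then show ?thesis using that(3) eq by (simp add: zero_le_mult_iff)
  qed
  have main: "k < ma \<Longrightarrow> \<forall>t\<ge>0. ?P (ma - 1 - k) t \<ge> 0" for k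
  proof (induction k)
    case 0
    then show ?case using in_C_last by simp
  next
    case (Suc k)
    obtain i where si: "Suc i = ma - 1 - k" "Suc i < ma" "ma - 1 - Suc k = i" using Suc.prems
      by (intro that[of "ma - 2 - k"]) auto
    have IH: "\<forall>t\<ge>0. ?P (Suc i) t \<ge> 0" using Suc by (simp add: si(1))
    have K: "ext_class_K (\<alpha> (Suc i))" using alpha_K si by auto
    show ?case unfolding si(3)
      by (rule nonneg_cmp[OF K]) (use psi_diff si IH init step[OF si(2)] in auto)
  qed
  have all: "\<forall>t\<ge>0. \<forall>i<ma. ?P i t \<ge> 0"
  proof (intro allI impI)
    fix t :: real and i assume "t \<ge> 0" "i < ma"
    then show "?P i t \<ge> 0" using main[of "ma - 1 - i"] by auto
  qed
  moreover have "\<forall>t\<ge>0. b (x t) \<ge> 0"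
  proof (intro allI impI)
    fix t :: real assume t: "t \<ge> 0"
    have "?P 0 t \<ge> 0" using all t ma_pos by auto
    moreover have "A 1 (x t) (p 1 1 t) > 0" using A_pos t ma_pos by auto
    ultimately show "b (x t) \<ge> 0" by (simp add: psi_traj_def zero_le_mult_iff)
  qed
  ultimately show ?thesis by blast
qed

end
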